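(* Let $n\ge2$, let $A\in\mathbb{R}^{n\times n}$ be Metzler, output unstable and nonsingular, $b_0\in\mathbb{R}^n_{\ge0}$ with $g_0:=-e_n^TA^{-1}b_0<0$, and let $\mu,\theta>0$, $r:=\mu/\theta$, $g_n:=-e_n^TA^{-1}e_n$, $u_*:=(g_0-r)/(g_nr)$. Then for all $\eta,k_p>0$ the equilibrium $\big(-A^{-1}(b_0-ru_*e_n),\ \mu/(\eta u_* ),\ u_*/k_p\big)$ of the system $\dot x=Ax-k_px_nz_2e_n+b_0$, $\dot z_1=\mu-k_p\eta z_1z_2$, $\dot z_2=\theta x_n-k_p\eta z_1z_2$ is locally exponentially stable.
   Context: $S:=[e_1\ \cdots\ e_{n-1}]$, $e_i$ standard basis vectors; $x_n=e_n^Tx$. Metzler: all off-diagonal entries nonnegative. Hurwitz stable: all eigenvalues have negative real part. $M$ is output unstable if $S^TMS$ is Hurwitz stable and $e_n^TMe_n>0$. An equilibrium is called locally exponentially stable here if the Jacobian matrix of the vector field at the equilibrium is Hurwitz stable. *)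

theory Defs
  imports "HOL-Analysis.Analysis" "Jordan_Normal_Form.Matrix" "Jordan_Normal_Form.Char_Poly"
begin

text \<open>Matrices/vectors of dimension n use Jordan_Normal_Form, indices 0..n-1;
  the paper's index n (e.g. e_n, x_n) is index n-1 here.\<close>

definition metzler :: "real mat \<Rightarrow> bool" where
  "metzler M \<longleftrightarrow> (\<forall>i<dim_row M. \<forall>j<dim_col M. i \<noteq> j \<longrightarrow> M $$ (i,j) \<ge> 0)"

definition hurwitz :: "real mat \<Rightarrow> bool" where
  "hurwitz M \<longleftrightarrow> (\<forall>k. eigenvalue (map_mat complex_of_real M) k \<longrightarrow> Re k < 0)"

definition S_mat :: "nat \<Rightarrow> real mat" where
  "S_mat n = mat n (n - 1) (\<lambda>(i,j). if i = j then 1 else 0)"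

definition output_unstable :: "real mat \<Rightarrow> bool" where
  "output_unstable M \<longleftrightarrow>
     (let n = dim_row M in
        hurwitz (transpose_mat (S_mat n) * M * S_mat n) \<and>
        unit_vec n (n - 1) \<bullet> (M *\<^sub>v unit_vec n (n - 1)) > 0)"

definition jacobian :: "nat \<Rightarrow> (real vec \<Rightarrow> real vec) \<Rightarrow> real vec \<Rightarrow> real mat" where
  "jacobian N F p = mat N N (\<lambda>(i,j). deriv (\<lambda>t. F (p + t \<cdot>\<^sub>v unit_vec N j) $ i) 0)"

definition loc_exp_stable :: "nat \<Rightarrow> (real vec \<Rightarrow> real vec) \<Rightarrow> real vec \<Rightarrow> bool" where
  "loc_exp_stable N F p \<longleftrightarrow> hurwitz (jacobian N F p)"

text \<open>The closed-loop vector field on states w = (x, z1, z2) in R^(n+2):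
  components 0..n-1 are x, component n is z1, component n+1 is z2.\<close>
definition closed_loop :: "nat \<Rightarrow> real mat \<Rightarrow> real vec \<Rightarrow> real \<Rightarrow> real \<Rightarrow> real \<Rightarrow> real \<Rightarrow> real vec \<Rightarrow> real vec" where
  "closed_loop n A b0 kp \<eta> \<mu> \<theta> w =
     (let x = vec n (\<lambda>i. w $ i); xn = w $ (n - 1); z1 = w $ n; z2 = w $ (n + 1);
          dx = A *\<^sub>v x - (kp * xn * z2) \<cdot>\<^sub>v unit_vec n (n - 1) + b0 in
      vec (n + 2) (\<lambda>i. if i < n then dx $ i
                        else if i = n then \<mu> - kp * \<eta> * z1 * z2
                        else \<theta> * xn - kp * \<eta> * z1 * z2))"

end

theory Submission
  imports Defs "Jordan_Normal_Form.Spectral_Radius"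
begin


lemma mv_sum: "A \<in> carrier_mat n m \<Longrightarrow> v \<in> carrier_vec m \<Longrightarrow> i < n \<Longrightarrow>
  (A *\<^sub>v v) $ i = (\<Sum>j<m. A $$ (i,j) * v $ j)"
  by (auto simp: scalar_prod_def lessThan_atLeast0 intro!: sum.cong)

lemma finite_ub: "finite S \<Longrightarrow> \<exists>b::real. \<forall>x\<in>S. f x < b"
proof -
  assume f: "finite S"
  have "\<forall>x\<in>S. f x < Max (insert 0 (f ` S)) + 1"
  proof
    fix x assume "x \<in> S"
    hence "f x \<le> Max (insert 0 (f ` S))" using f by (intro Max_ge) auto
    thus "f x < Max (insert 0 (f ` S)) + 1" by simp
  qed
  thus ?thesis by blast
qed

lemma finite_ub_below: assumes f: "finite S" and lt: "\<forall>x\<in>S. f x < (s::real)"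
  shows "\<exists>\<rho><s. \<forall>x\<in>S. f x < \<rho>"
proof (cases "S = {}")
  case True thus ?thesis by (intro exI[of _ "s - 1"]) auto
next
  case False
  let ?m = "Max (f ` S)"
  have "?m \<in> f ` S" using f False by (intro Max_in) auto
  hence ms: "?m < s" using lt by auto
  have "\<forall>x\<in>S. f x < (?m + s)/2"
  proof
    fix x assume "x \<in> S"
    hence "f x \<le> ?m" using f by auto
    thus "f x < (?m + s)/2" using ms by auto
  qed
  moreover have "(?m + s)/2 < s" using ms by auto
  ultimately show ?thesis by blast
qed

lemma metzler_hurwitz_nopos:
  fixes M :: "real mat" and x :: "real vec"
  assumes M: "M \<in> carrier_mat m m" and metz: "metzler M" and hw: "hurwitz M"
    and x: "x \<in> carrier_vec m" and xnn: "\<forall>i<m. x$i \<ge> 0" and Mx: "\<forall>i<m. (M *\<^sub>v x)$i \<ge> 0"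
    and i0: "i0 < m"
  shows "x $ i0 = 0"
proof (rule ccontr)
  assume "x $ i0 \<noteq> 0"
  with xnn i0 have xi0: "x $ i0 > 0" by force
  define MC where "MC = map_mat complex_of_real M"
  have MC: "MC \<in> carrier_mat m m" using M by (simp add: MC_def)
  have fin: "finite (spectrum MC)" using card_finite_spectrum(1)[OF MC] .
  have re: "\<And>\<mu>. \<mu> \<in> spectrum MC \<Longrightarrow> Re \<mu> < 0" using hw unfolding hurwitz_def spectrum_def MC_def by auto
  obtain s1 where s1: "\<And>\<mu>. \<mu> \<in> spectrum MC \<Longrightarrow> (cmod \<mu>)^2 / (-2 * Re \<mu>) < s1"
    using finite_ub[OF fin, of "\<lambda>\<mu>. (cmod \<mu>)^2 / (-2 * Re \<mu>)"] by blast
  obtain s2 where s2: "\<And>i. i \<in> {..<m} \<Longrightarrow> - M$$(i,i) < s2"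
    using finite_ub[of "{..<m}" "\<lambda>i. - M$$(i,i)"] by blast
  define s where "s = max (max s1 s2) 1"
  have s_pos: "s > 0" by (simp add: s_def)
  have diag: "\<And>i. i<m \<Longrightarrow> s + M$$(i,i) > 0" using s2 by (force simp: s_def)
  have sm: "cmod (complex_of_real s + \<mu>) < s" if mu: "\<mu> \<in> spectrum MC" for \<mu>
  proof -
    have r: "Re \<mu> < 0" using re mu .
    define D where "D = -2 * Re \<mu>"
    have D: "D > 0" using r by (simp add: D_def)
    have "(cmod \<mu>)^2 / D < s" using s1[OF mu] s_def by (auto simp: D_def)
    hence "(cmod \<mu>)^2 < s * D" using pos_divide_less_eq[OF D] by blast
    hence lt: "(cmod \<mu>)^2 < s * (-2 * Re \<mu>)" by (simp add: D_def)
    have "(cmod (complex_of_real s + \<mu>))^2 = (s + Re \<mu>)^2 + (Im \<mu>)^2" by (simp add: cmod_power2)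
    also have "\<dots> = s^2 + 2 * s * Re \<mu> + (cmod \<mu>)^2" using cmod_power2[of \<mu>] by (simp add: power2_eq_square algebra_simps)
    also have "\<dots> < s^2" using lt by (simp add: algebra_simps)
    finally have "(cmod (complex_of_real s + \<mu>))^2 < s^2" .
    from power_less_imp_less_base[OF this] s_pos show ?thesis by simp
  qed
  obtain \<rho> where \<rho>s: "\<rho> < s" and \<rho>b: "\<And>\<mu>. \<mu> \<in> spectrum MC \<Longrightarrow> cmod (complex_of_real s + \<mu>) < \<rho>"
    using finite_ub_below[OF fin, of "\<lambda>\<mu>. cmod (complex_of_real s + \<mu>)" s] sm by blast
  define r where "r = max \<rho> (s/2)"
  have rs: "r < s" using \<rho>s s_pos by (simp add: r_def)
  have r_pos: "r > 0" using s_pos by (simp add: r_def)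
  have rb: "\<And>\<mu>. \<mu> \<in> spectrum MC \<Longrightarrow> cmod (complex_of_real s + \<mu>) < r"
    using \<rho>b by (force simp: r_def)
  define Q where "Q = mat m m (\<lambda>(i,j). ((if i = j then s else 0) + M$$(i,j)) / r)"
  define t where "t = s / r"
  have t1: "t > 1" using rs r_pos by (simp add: t_def)
  have Q: "Q \<in> carrier_mat m m" by (simp add: Q_def)
  have Qnn: "Q$$(i,j) \<ge> 0" if "i<m" "j<m" for i j
  proof (cases "i = j")
    case True thus ?thesis using diag[of i] that r_pos by (simp add: Q_def)
  next
    case False thus ?thesis using metz M that r_pos by (auto simp: Q_def metzler_def)
  qed
  define QC where "QC = map_mat complex_of_real Q"
  have QC: "QC \<in> carrier_mat m m" using Q by (simp add: QC_def)
  have evQ: "cmod k < 1" if ev: "eigenvalue QC k" for k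
  proof -
    from ev obtain v where v: "v \<in> carrier_vec m" "v \<noteq> 0\<^sub>v m" "QC *\<^sub>v v = k \<cdot>\<^sub>v v"
      unfolding eigenvalue_def eigenvector_def using QC by auto
    have "MC *\<^sub>v v = (complex_of_real r * k - complex_of_real s) \<cdot>\<^sub>v v"
    proof (rule eq_vecI)
      fix i assume "i < dim_vec ((complex_of_real r * k - complex_of_real s) \<cdot>\<^sub>v v)"
      hence i: "i < m" using v by simp
      define cs where "cs = complex_of_real s / complex_of_real r"
      define ci where "ci = 1 / complex_of_real r"
      have "k * v$i = (QC *\<^sub>v v)$i" using v i by simp
      also have "\<dots> = (\<Sum>j<m. QC $$ (i,j) * v$j)" by (rule mv_sum[OF QC v(1) i])
      also have "\<dots> = (\<Sum>j<m. cs * (if i = j then v$j else 0) + ci * (MC $$ (i,j) * v$j))"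
      proof (intro sum.cong refl)
        fix j assume "j \<in> {..<m}"
        hence j: "j < m" by simp
        have "QC $$ (i,j) = complex_of_real s / complex_of_real r * (if i = j then 1 else 0) + 1 / complex_of_real r * MC $$ (i,j)"
          using i j by (simp add: QC_def Q_def MC_def carrier_matD[OF M] add_divide_distrib)
        thus "QC $$ (i,j) * v$j = cs * (if i = j then v$j else 0) + ci * (MC $$ (i,j) * v$j)"
          by (simp add: algebra_simps cs_def ci_def)
      qed
      also have "\<dots> = (\<Sum>j<m. cs * (if i = j then v$j else 0)) + (\<Sum>j<m. ci * (MC $$ (i,j) * v$j))"
        by (rule sum.distrib)
      also have "(\<Sum>j<m. cs * (if i = j then v$j else 0)) = cs * v$i"
        using i by (simp add: sum_distrib_left[symmetric])
      also have "(\<Sum>j<m. ci * (MC $$ (i,j) * v$j)) = ci * (MC *\<^sub>v v)$i"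
        by (simp add: sum_distrib_left[symmetric] mv_sum[OF MC v(1) i])
      finally have "k * v$i = (complex_of_real s / complex_of_real r) * v$i + (1 / complex_of_real r) * (MC *\<^sub>v v)$i"
        by (simp add: cs_def ci_def)
      hence "complex_of_real r * (k * v$i) = complex_of_real s * v$i + (MC *\<^sub>v v)$i"
        using r_pos by (simp add: field_simps)
      thus "(MC *\<^sub>v v)$i = ((complex_of_real r * k - complex_of_real s) \<cdot>\<^sub>v v)$i"
        using i v by (simp add: algebra_simps)
    qed (use v MC in auto)
    hence "eigenvalue MC (complex_of_real r * k - complex_of_real s)"
      unfolding eigenvalue_def eigenvector_def using v MC by auto
    hence "cmod (complex_of_real s + (complex_of_real r * k - complex_of_real s)) < r"
      using rb[of "complex_of_real r * k - complex_of_real s"] unfolding spectrum_def by simp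
    hence "r * cmod k < r" using r_pos by (simp add: norm_mult)
    thus ?thesis using r_pos by simp
  qed
  have m0: "m > 0" using i0 by auto
  have "spectral_radius QC < 1" using spectral_radius_mem_max(1)[OF QC m0] evQ unfolding spectrum_def by auto
  then obtain c where c: "\<And>k. norm_bound (QC ^\<^sub>m k) c"
    using spectral_radius_jnf_norm_bound_less_1_upper_triangular[OF QC] by blast
  have bnd: "\<bar>(Q ^\<^sub>m k)$$(i,j)\<bar> \<le> c" if "i<m" "j<m" for k i j
  proof -
    have "QC ^\<^sub>m k = map_mat complex_of_real (Q ^\<^sub>m k)"
      unfolding QC_def by (rule of_real_hom.mat_hom_pow[OF Q, symmetric])
    with c[of k] that Q show ?thesis unfolding norm_bound_def by auto
  qed
  have Qx: "(Q *\<^sub>v x)$l \<ge> t * x$l" if l: "l<m" for l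
  proof -
    have "(Q *\<^sub>v x)$l = (\<Sum>j<m. ((if l = j then s * x$j else 0) + M$$(l,j) * x$j) / r)"
      using l by (simp add: mv_sum[OF Q x l]) (intro sum.cong, auto simp: Q_def field_simps)
    also have "\<dots> = (s * x$l + (M *\<^sub>v x)$l) / r"
      by (simp add: sum_divide_distrib[symmetric] sum.distrib mv_sum[OF M x l] l)
    also have "\<dots> \<ge> t * x$l" using Mx l r_pos by (simp add: t_def divide_right_mono)
    finally show ?thesis .
  qed
  have grow: "(\<forall>i<m. \<forall>j<m. (Q ^\<^sub>m k)$$(i,j) \<ge> 0) \<and> (\<forall>i<m. (Q ^\<^sub>m k *\<^sub>v x)$i \<ge> t^k * x$i)" for k
  proof (induct k)
    case 0
    show ?case using x Q by auto
  next
    case (Suc k)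
    have Pk: "Q ^\<^sub>m k \<in> carrier_mat m m" using Q by simp
    have "\<forall>i<m. \<forall>j<m. (Q ^\<^sub>m Suc k)$$(i,j) \<ge> 0"
    proof (intro allI impI)
      fix i j assume ij: "i<m" "j<m"
      have "(Q ^\<^sub>m Suc k)$$(i,j) = (\<Sum>l<m. (Q ^\<^sub>m k)$$(i,l) * Q$$(l,j))"
        using ij Pk Q by (simp add: scalar_prod_def lessThan_atLeast0)
      also have "\<dots> \<ge> 0" using Suc ij Qnn by (intro sum_nonneg mult_nonneg_nonneg) auto
      finally show "(Q ^\<^sub>m Suc k)$$(i,j) \<ge> 0" .
    qed
    moreover have "\<forall>i<m. (Q ^\<^sub>m Suc k *\<^sub>v x)$i \<ge> t^Suc k * x$i"
    proof (intro allI impI)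
      fix i assume i: "i<m"
      have Qxc: "Q *\<^sub>v x \<in> carrier_vec m" using Q x by simp
      have "(Q ^\<^sub>m Suc k *\<^sub>v x) = Q ^\<^sub>m k *\<^sub>v (Q *\<^sub>v x)"
        using assoc_mult_mat_vec[OF Pk Q x] by simp
      hence "(Q ^\<^sub>m Suc k *\<^sub>v x)$i = (\<Sum>l<m. (Q ^\<^sub>m k)$$(i,l) * (Q *\<^sub>v x)$l)"
        using mv_sum[OF Pk Qxc i] by simp
      also have "\<dots> \<ge> (\<Sum>l<m. (Q ^\<^sub>m k)$$(i,l) * (t * x$l))"
        using Suc i Qx by (intro sum_mono mult_left_mono) auto
      also have "(\<Sum>l<m. (Q ^\<^sub>m k)$$(i,l) * (t * x$l)) = t * (Q ^\<^sub>m k *\<^sub>v x)$i"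
        using mv_sum[OF Pk x i] by (simp add: sum_distrib_left algebra_simps)
      also have "t * (Q ^\<^sub>m k *\<^sub>v x)$i \<ge> t * (t^k * x$i)"
        using Suc i t1 by (intro mult_left_mono) auto
      finally show "(Q ^\<^sub>m Suc k *\<^sub>v x)$i \<ge> t^Suc k * x$i" by simp
    qed
    ultimately show ?case by blast
  qed
  have up: "t^k * x$i0 \<le> c * (\<Sum>j<m. x$j)" for k
  proof -
    have Pk: "Q ^\<^sub>m k \<in> carrier_mat m m" using Q by simp
    have "t^k * x$i0 \<le> (Q ^\<^sub>m k *\<^sub>v x)$i0" using grow i0 by blast
    also have "\<dots> = (\<Sum>j<m. (Q ^\<^sub>m k)$$(i0,j) * x$j)" by (rule mv_sum[OF Pk x i0])
    also have "\<dots> \<le> (\<Sum>j<m. c * x$j)"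
    proof (intro sum_mono)
      fix j assume "j \<in> {..<m}"
      hence j: "j<m" by simp
      have "(Q ^\<^sub>m k)$$(i0,j) \<le> c" using bnd[OF i0 j, of k] by linarith
      thus "(Q ^\<^sub>m k)$$(i0,j) * x$j \<le> c * x$j" using xnn j by (intro mult_right_mono) auto
    qed
    finally show ?thesis by (simp add: sum_distrib_left)
  qed
  obtain k where k: "(c * (\<Sum>j<m. x$j)) / x$i0 < t^k" using real_arch_pow[OF t1] by blast
  hence "c * (\<Sum>j<m. x$j) < t^k * x$i0" using xi0 by (simp add: pos_divide_less_eq)
  with up[of k] show False by simp
qed



lemma metzler_hurwitz_mono:
  fixes M :: "real mat" and y :: "real vec"
  assumes M: "M \<in> carrier_mat m m" and metz: "metzler M" and hw: "hurwitz M"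
    and y: "y \<in> carrier_vec m" and My: "\<forall>i<m. (M *\<^sub>v y)$i \<ge> 0" and i: "i < m"
  shows "y $ i \<le> 0"
proof -
  define x where "x = vec m (\<lambda>j. max (y$j) 0)"
  have x: "x \<in> carrier_vec m" by (simp add: x_def)
  have xnn: "\<forall>j<m. x$j \<ge> 0" by (simp add: x_def)
  have Moff: "\<And>l j. l < m \<Longrightarrow> j < m \<Longrightarrow> l \<noteq> j \<Longrightarrow> M$$(l,j) \<ge> 0"
    using metz M unfolding metzler_def by auto
  have "\<forall>l<m. (M *\<^sub>v x)$l \<ge> 0"
  proof (intro allI impI)
    fix l assume l: "l < m"
    show "(M *\<^sub>v x)$l \<ge> 0"
    proof (cases "y$l > 0")
      case True
      have "(M *\<^sub>v x)$l - (M *\<^sub>v y)$l = (\<Sum>j<m. M$$(l,j) * (x$j - y$j))"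
        by (simp add: mv_sum[OF M x l] mv_sum[OF M y l] sum_subtractf[symmetric] algebra_simps)
      also have "\<dots> \<ge> 0"
      proof (intro sum_nonneg)
        fix j assume "j \<in> {..<m}"
        hence j: "j < m" by simp
        show "M$$(l,j) * (x$j - y$j) \<ge> 0"
        proof (cases "j = l")
          case True thus ?thesis using \<open>y$l > 0\<close> j by (simp add: x_def)
        next
          case False thus ?thesis using Moff[OF l j] j by (simp add: x_def)
        qed
      qed
      finally show ?thesis using My[rule_format, OF l] by linarith
    next
      case False
      have "(M *\<^sub>v x)$l = (\<Sum>j<m. M$$(l,j) * x$j)" by (rule mv_sum[OF M x l])
      also have "\<dots> \<ge> 0"
      proof (intro sum_nonneg)
        fix j assume "j \<in> {..<m}"
        hence j: "j < m" by simp
        show "M$$(l,j) * x$j \<ge> 0"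
        proof (cases "j = l")
          case True thus ?thesis using False j by (simp add: x_def)
        next
          case False thus ?thesis using Moff[OF l j] j by (simp add: x_def)
        qed
      qed
      finally show ?thesis .
    qed
  qed
  from metzler_hurwitz_nopos[OF M metz hw x xnn this i] show ?thesis by (simp add: x_def i)
qed

lemma re_inv_nonneg: "Re (z::complex) \<ge> 0 \<Longrightarrow> Re (1 / z) \<ge> 0"
  by (simp add: Re_complex_div_ge_0)

lemma frac_id: fixes l s dd cc :: complex assumes "l \<noteq> 0" "l + s \<noteq> 0" "s \<noteq> 0" "cc = s - dd"
  shows "(l + dd) / (l * (l + s)) = dd / s * (1 / l) + cc / s * (1 / (l + s))"
proof -
  have "dd / s * (1 / l) + cc / s * (1 / (l + s)) = (dd * (s * (l + s)) + cc * (s * l)) / ((s * l) * (s * (l + s)))"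
    using assms(1-3) by (simp add: add_frac_eq)
  also have "dd * (s * (l + s)) + cc * (s * l) = (s * s) * (l + dd)" unfolding assms(4) by (simp add: algebra_simps)
  also have "(s * l) * (s * (l + s)) = (s * s) * (l * (l + s))" by (simp add: algebra_simps)
  also have "(s * s) * (l + dd) / ((s * s) * (l * (l + s))) = (l + dd) / (l * (l + s))"
    using assms(3) by (intro mult_divide_mult_cancel_left) simp
  finally show ?thesis by simp
qed

lemma final_alg:
  fixes l h X Z1 Z2 :: complex and a u \<alpha> c d K \<theta> :: real
  assumes l: "Re l \<ge> 0" and c: "c > 0" and d: "d > 0" and K: "K > 0" and th: "\<theta> > 0"
    and u: "u > \<alpha>" and h: "cmod h \<le> (\<alpha> - a) * cmod X"
    and e1: "h + (of_real a - of_real u) * X - of_real K * Z2 = l * X"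
    and e2: "- of_real d * Z1 - of_real c * Z2 = l * Z1"
    and e3: "of_real \<theta> * X - of_real d * Z1 - of_real c * Z2 = l * Z2"
  shows "X = 0 \<and> Z1 = 0 \<and> Z2 = 0"
proof -
  have ld: "l + of_real d \<noteq> 0"
  proof
    assume "l + of_real d = 0" hence "Re (l + of_real d) = 0" by simp
    thus False using l d by simp
  qed
  have lcd: "l + of_real c + of_real d \<noteq> 0"
  proof
    assume "l + of_real c + of_real d = 0" hence "Re (l + of_real c + of_real d) = 0" by simp
    thus False using l d c by simp
  qed
  have E: "l * (l + of_real c + of_real d) * Z2 = of_real \<theta> * (l + of_real d) * X"
  proof -
    have "l * (l + of_real c + of_real d) * Z2 - of_real \<theta> * (l + of_real d) * X
      = - (l + of_real d) * (of_real \<theta> * X - of_real d * Z1 - of_real c * Z2 - l * Z2)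
        + of_real d * (- of_real d * Z1 - of_real c * Z2 - l * Z1)"
      by (simp add: algebra_simps)
    also have "\<dots> = 0" using e2 e3 by simp
    finally show ?thesis by simp
  qed
  show ?thesis
  proof (cases "X = 0")
    case True
    hence "cmod h \<le> 0" using h by simp
    hence "h = 0" by simp
    with e1 True have "of_real K * Z2 = 0" by simp
    hence Z2: "Z2 = 0" using K by simp
    have "(l + of_real d) * Z1 = l * Z1 - (- of_real d * Z1 - of_real c * Z2)" using Z2 by (simp add: algebra_simps)
    also have "\<dots> = 0" using e2 by simp
    finally have "(l + of_real d) * Z1 = 0" .
    hence "Z1 = 0" using ld by simp
    with True Z2 show ?thesis by simp
  next
    case False
    define H where "H = h / X"
    have hH: "h = H * X" using False by (simp add: H_def)
    have Hb: "cmod H \<le> \<alpha> - a" using h False by (simp add: H_def norm_divide pos_divide_le_eq)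
    define D where "D = l - of_real a + of_real u - H"
    have ReD: "Re D > 0"
    proof -
      have "Re H \<le> cmod H" by (rule complex_Re_le_cmod)
      thus ?thesis using Hb l u by (simp add: D_def)
    qed
    have KZ: "of_real K * Z2 = - D * X" using e1 by (simp add: hH D_def algebra_simps)
    have "of_real K * (of_real \<theta> * (l + of_real d) * X) = of_real K * (l * (l + of_real c + of_real d) * Z2)"
      using E by simp
    also have "\<dots> = (of_real K * Z2) * (l * (l + of_real c + of_real d))" by (simp add: mult_ac)
    also have "\<dots> = - D * X * (l * (l + of_real c + of_real d))" using KZ by simp
    finally have "of_real K * (of_real \<theta> * (l + of_real d) * X) = - D * X * (l * (l + of_real c + of_real d))" .
    hence "(of_real K * of_real \<theta> * (l + of_real d)) * X = (- D * (l * (l + of_real c + of_real d))) * X"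
      by (simp add: mult_ac)
    hence KD: "of_real K * of_real \<theta> * (l + of_real d) = - D * (l * (l + of_real c + of_real d))"
      using mult_right_cancel[OF False] by blast
    have l0: "l \<noteq> 0"
    proof
      assume "l = 0"
      with KD have "of_real K * of_real \<theta> * of_real d = (0::complex)" by simp
      thus False using K th d by simp
    qed
    have T0: "l * (l + of_real c + of_real d) \<noteq> 0" using l0 lcd by simp
    have "- D = (- D * (l * (l + of_real c + of_real d))) / (l * (l + of_real c + of_real d))"
      using T0 by simp
    also have "\<dots> = (of_real K * of_real \<theta> * (l + of_real d)) / (l * (l + of_real c + of_real d))"
      using KD by simp
    also have "\<dots> = of_real (K * \<theta>) * ((l + of_real d) / (l * (l + of_real c + of_real d)))"
      by simp
    also have "(l + of_real d) / (l * (l + of_real c + of_real d))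
        = of_real (d / (c + d)) * (1 / l) + of_real (c / (c + d)) * (1 / (l + of_real c + of_real d))"
    proof -
      have cd: "of_real c + of_real d \<noteq> (0::complex)"
      proof
        assume "of_real c + of_real d = (0::complex)" hence "Re (of_real c + of_real d :: complex) = 0" by simp
        thus False using c d by simp
      qed
      have "(l + of_real d) / (l * (l + (of_real c + of_real d)))
        = of_real d / (of_real c + of_real d) * (1 / l) + of_real c / (of_real c + of_real d) * (1 / (l + (of_real c + of_real d)))"
        using lcd l0 cd by (intro frac_id) (auto simp: add.assoc)
      thus ?thesis by (simp add: add.assoc)
    qed
    finally have eqD: "- D = of_real (K * \<theta>) * (of_real (d / (c + d)) * (1 / l) + of_real (c / (c + d)) * (1 / (l + of_real c + of_real d)))" .
    define il where "il = 1 / l"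
    define ic where "ic = 1 / (l + of_real c + of_real d)"
    have "Re (- D) = Re (of_real (K * \<theta>) * (of_real (d / (c + d)) * il + of_real (c / (c + d)) * ic))"
      using eqD by (simp only: il_def ic_def)
    also have "\<dots> = (K * \<theta>) * ((d / (c + d)) * Re il + (c / (c + d)) * Re ic)"
      by simp
    finally have "Re (- D) = (K * \<theta>) * ((d / (c + d)) * Re (1 / l) + (c / (c + d)) * Re (1 / (l + of_real c + of_real d)))"
      by (simp only: il_def ic_def)
    also have "\<dots> \<ge> 0"
      using re_inv_nonneg[of l] re_inv_nonneg[of "l + of_real c + of_real d"] l c d K th
      by (intro mult_nonneg_nonneg add_nonneg_nonneg) auto
    finally show ?thesis using ReD by simp
  qed
qed



lemma cl_comp:
  assumes A: "A \<in> carrier_mat n n" and b0: "b0 \<in> carrier_vec n" and i: "i < n + 2"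
  shows "closed_loop n A b0 kp \<eta> \<mu> \<theta> w $ i =
    (if i < n then (\<Sum>k<n. A$$(i,k) * w$k) - (if i = n - 1 then kp * (w$(n-1) * w$(n+1)) else 0) + b0$i
     else if i = n then \<mu> - kp * \<eta> * (w$n * w$(n+1))
     else \<theta> * w$(n-1) - kp * \<eta> * (w$n * w$(n+1)))"
proof -
  have x: "vec n (\<lambda>i. w$i) \<in> carrier_vec n" by simp
  show ?thesis
    unfolding closed_loop_def Let_def using i A b0
    by (auto simp: scalar_prod_def lessThan_atLeast0 mult_ac carrier_matD[OF A] intro!: sum.cong)
qed

lemma deriv_quad: assumes "\<exists>c0 c2. \<forall>t. f t = c0 + c1 * t + c2 * t^2" shows "deriv f 0 = (c1::real)"
proof -
  from assms obtain c0 c2 where f: "\<And>t. f t = c0 + c1 * t + c2 * t^2" by blast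
  have "f = (\<lambda>t. c0 + c1 * t + c2 * t^2)" using f by auto
  moreover have "((\<lambda>t. c0 + c1 * t + c2 * t^2) has_real_derivative c1) (at 0)"
    by (auto intro!: derivative_eq_intros)
  ultimately show ?thesis by (simp add: DERIV_imp_deriv)
qed

definition JJ :: "nat \<Rightarrow> real mat \<Rightarrow> real \<Rightarrow> real \<Rightarrow> real \<Rightarrow> real vec \<Rightarrow> nat \<Rightarrow> nat \<Rightarrow> real" where
 "JJ n A kp \<eta> \<theta> P i j = (let d = (\<lambda>k. if k = j then 1 else 0::real) in
   if i < n then (if j < n then A$$(i,j) else 0) - (if i = n-1 then kp * (d (n-1) * P$(n+1) + P$(n-1) * d (n+1)) else 0)
   else if i = n then - (kp * \<eta> * (d n * P$(n+1) + P$n * d (n+1)))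
   else \<theta> * d (n-1) - kp * \<eta> * (d n * P$(n+1) + P$n * d (n+1)))"

lemma jac_cl:
  assumes A: "A \<in> carrier_mat n n" and b0: "b0 \<in> carrier_vec n" and P: "P \<in> carrier_vec (n+2)"
    and n1: "n \<ge> 1"
  shows "jacobian (n+2) (closed_loop n A b0 kp \<eta> \<mu> \<theta>) P = mat (n+2) (n+2) (\<lambda>(i,j). JJ n A kp \<eta> \<theta> P i j)"
proof (rule eq_matI)
  fix i j assume i: "i < dim_row (mat (n+2) (n+2) (\<lambda>(i,j). JJ n A kp \<eta> \<theta> P i j))"
    and j: "j < dim_col (mat (n+2) (n+2) (\<lambda>(i,j). JJ n A kp \<eta> \<theta> P i j))"
  hence i: "i < n+2" and j: "j < n+2" by auto
  define d where "d = (\<lambda>k. if k = j then 1 else 0::real)"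
  have wk: "(P + t \<cdot>\<^sub>v unit_vec (n+2) j)$k = P$k + t * d k" if "k < n+2" for k t
    using that P j by (simp add: d_def)
  let ?F = "\<lambda>t. closed_loop n A b0 kp \<eta> \<mu> \<theta> (P + t \<cdot>\<^sub>v unit_vec (n+2) j) $ i"
  have w1: "(P + t \<cdot>\<^sub>v unit_vec (n+2) j)$(n-1) = P$(n-1) + t * d (n-1)" for t using wk[of "n-1"] by simp
  have w2: "(P + t \<cdot>\<^sub>v unit_vec (n+2) j)$n = P$n + t * d n" for t using wk[of n] by simp
  have w3: "(P + t \<cdot>\<^sub>v unit_vec (n+2) j)$(n+1) = P$(n+1) + t * d (n+1)" for t using wk[of "n+1"] by simp
  have JJd: "JJ n A kp \<eta> \<theta> P i j =
     (if i < n then (if j < n then A$$(i,j) else 0) - (if i = n-1 then kp * (d (n-1) * P$(n+1) + P$(n-1) * d (n+1)) else 0)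
      else if i = n then - (kp * \<eta> * (d n * P$(n+1) + P$n * d (n+1)))
      else \<theta> * d (n-1) - kp * \<eta> * (d n * P$(n+1) + P$n * d (n+1)))"
    unfolding JJ_def d_def Let_def by simp
  have "deriv ?F 0 = JJ n A kp \<eta> \<theta> P i j"
  proof (rule deriv_quad)
    show "\<exists>c0 c2. \<forall>t. ?F t = c0 + JJ n A kp \<eta> \<theta> P i j * t + c2 * t^2"
    proof (cases "i < n")
      case True
      define S0 where "S0 = (\<Sum>k<n. A$$(i,k) * P$k)"
      define Ad where "Ad = (if j < n then A$$(i,j) else 0)"
      have sum: "(\<Sum>k<n. A$$(i,k) * (P + t \<cdot>\<^sub>v unit_vec (n+2) j)$k) = S0 + t * Ad" for t
      proof -
        have "(\<Sum>k<n. A$$(i,k) * (P + t \<cdot>\<^sub>v unit_vec (n+2) j)$k) = (\<Sum>k<n. A$$(i,k) * P$k + t * (if k = j then A$$(i,k) else 0))"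
        proof (intro sum.cong refl)
          fix k assume "k \<in> {..<n}"
          hence k: "k < n+2" by simp
          show "A$$(i,k) * (P + t \<cdot>\<^sub>v unit_vec (n+2) j)$k = A$$(i,k) * P$k + t * (if k = j then A$$(i,k) else 0)"
            unfolding wk[OF k] by (simp add: d_def algebra_simps)
        qed
        also have "\<dots> = S0 + t * Ad"
          by (simp add: sum.distrib sum_distrib_left[symmetric] S0_def Ad_def)
        finally show ?thesis .
      qed
      have Ft: "?F t = S0 + t * Ad - (if i = n - 1 then kp * ((P$(n-1) + t * d (n-1)) * (P$(n+1) + t * d (n+1))) else 0) + b0$i" for t
      proof -
        have "?F t = (\<Sum>k<n. A$$(i,k) * (P + t \<cdot>\<^sub>v unit_vec (n+2) j)$k) - (if i = n - 1 then kp * ((P + t \<cdot>\<^sub>v unit_vec (n+2) j)$(n-1) * (P + t \<cdot>\<^sub>v unit_vec (n+2) j)$(n+1)) else 0) + b0$i"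
          using cl_comp[OF A b0 i, of kp \<eta> \<mu> \<theta> "P + t \<cdot>\<^sub>v unit_vec (n+2) j"] True by (simp only: if_True)
        thus ?thesis by (simp only: sum w1 w3)
      qed
      show ?thesis
      proof (cases "i = n - 1")
        case True2: True
        show ?thesis
          by (rule exI[of _ "S0 - kp * (P$(n-1) * P$(n+1)) + b0$i"], rule exI[of _ "- kp * (d (n-1) * d (n+1))"])
            (unfold Ft JJd, use n1 in \<open>simp add: True True2 Ad_def power2_eq_square algebra_simps\<close>)
      next
        case False
        show ?thesis
          by (rule exI[of _ "S0 + b0$i"], rule exI[of _ 0])
            (unfold Ft JJd, use n1 True False in \<open>simp add: Ad_def algebra_simps\<close>)
      qed
    next
      case False
      show ?thesis
      proof (cases "i = n")
        case True
        have Ft: "?F t = \<mu> - kp * \<eta> * ((P$n + t * d n) * (P$(n+1) + t * d (n+1)))" for t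
        proof -
          have "?F t = \<mu> - kp * \<eta> * ((P + t \<cdot>\<^sub>v unit_vec (n+2) j)$n * (P + t \<cdot>\<^sub>v unit_vec (n+2) j)$(n+1))"
            using cl_comp[OF A b0 i, of kp \<eta> \<mu> \<theta> "P + t \<cdot>\<^sub>v unit_vec (n+2) j"] True by simp
          thus ?thesis by (simp only: w2 w3)
        qed
        show ?thesis
          by (rule exI[of _ "\<mu> - kp * \<eta> * (P$n * P$(n+1))"], rule exI[of _ "- kp * \<eta> * (d n * d (n+1))"])
            (unfold Ft JJd, use n1 True in \<open>simp add: power2_eq_square algebra_simps\<close>)
      next
        case False2: False
        have Ft: "?F t = \<theta> * (P$(n-1) + t * d (n-1)) - kp * \<eta> * ((P$n + t * d n) * (P$(n+1) + t * d (n+1)))" for t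
        proof -
          have "?F t = \<theta> * (P + t \<cdot>\<^sub>v unit_vec (n+2) j)$(n-1) - kp * \<eta> * ((P + t \<cdot>\<^sub>v unit_vec (n+2) j)$n * (P + t \<cdot>\<^sub>v unit_vec (n+2) j)$(n+1))"
            using cl_comp[OF A b0 i, of kp \<eta> \<mu> \<theta> "P + t \<cdot>\<^sub>v unit_vec (n+2) j"] False False2 by simp
          thus ?thesis by (simp only: w1 w2 w3)
        qed
        show ?thesis
          by (rule exI[of _ "\<theta> * P$(n-1) - kp * \<eta> * (P$n * P$(n+1))"], rule exI[of _ "- kp * \<eta> * (d n * d (n+1))"])
            (unfold Ft JJd, use n1 False False2 in \<open>simp add: power2_eq_square algebra_simps\<close>)
      qed
    qed
  qed
  thus "jacobian (n+2) (closed_loop n A b0 kp \<eta> \<mu> \<theta>) P $$ (i, j) = mat (n+2) (n+2) (\<lambda>(i,j). JJ n A kp \<eta> \<theta> P i j) $$ (i, j)"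
    using i j by (simp add: jacobian_def)
qed (simp_all add: jacobian_def)



lemma if10: "(if P then 1 else 0) * (x::'a::semiring_1) = (if P then x else 0)" by simp

lemma S_A_S:
  assumes A: "A \<in> carrier_mat n n" and nm: "n = Suc m"
  shows "transpose_mat (S_mat n) * A * S_mat n = mat m m (\<lambda>(i,j). A$$(i,j))"
proof -
  have S: "S_mat n \<in> carrier_mat n m" using nm by (simp add: S_mat_def)
  have ST: "(transpose_mat (S_mat n) * A) $$ (i,k) = A$$(i,k)" if i: "i < m" and k: "k < n" for i k
  proof -
    have "(transpose_mat (S_mat n) * A) $$ (i,k) = (\<Sum>l\<in>{0..<n}. if l = i then A$$(l,k) else 0)"
      using i k S A nm by (auto simp: scalar_prod_def S_mat_def if10 intro!: sum.cong)
    also have "\<dots> = A$$(i,k)" using i nm by simp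
    finally show ?thesis .
  qed
  show ?thesis
  proof (rule eq_matI)
    fix i j assume "i < dim_row (mat m m (\<lambda>(i,j). A$$(i,j)))" "j < dim_col (mat m m (\<lambda>(i,j). A$$(i,j)))"
    hence i: "i < m" and j: "j < m" by auto
    have "(transpose_mat (S_mat n) * A * S_mat n) $$ (i,j) = (\<Sum>k\<in>{0..<n}. (transpose_mat (S_mat n) * A) $$ (i,k) * (if k = j then 1 else 0))"
      using i j S A nm by (simp add: scalar_prod_def S_mat_def)
    also have "\<dots> = (\<Sum>k\<in>{0..<n}. if k = j then A$$(i,k) else 0)"
      using ST i by (intro sum.cong) auto
    also have "\<dots> = A$$(i,j)" using j nm by simp
    finally show "(transpose_mat (S_mat n) * A * S_mat n) $$ (i,j) = mat m m (\<lambda>(i,j). A$$(i,j)) $$ (i,j)"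
      using i j by simp
  qed (use S A in auto)
qed



theorem mainTheorem13:
  fixes n :: nat and A Ainv :: "real mat" and b0 :: "real vec" and \<mu> \<theta> :: real
  assumes n2: "n \<ge> 2"
    and A_carr: "A \<in> carrier_mat n n"
    and metz: "metzler A"
    and ou: "output_unstable A"
    and Ainv_carr: "Ainv \<in> carrier_mat n n"
    and Ainv: "A * Ainv = 1\<^sub>m n"
    and b0_carr: "b0 \<in> carrier_vec n"
    and b0_nonneg: "\<forall>i<n. b0 $ i \<ge> 0"
    and g0_neg: "- (unit_vec n (n - 1) \<bullet> (Ainv *\<^sub>v b0)) < 0"
    and mu_pos: "\<mu> > 0" and theta_pos: "\<theta> > 0"
  shows "\<forall>\<eta> kp. \<eta> > 0 \<longrightarrow> kp > 0 \<longrightarrow>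
    (let g0 = - (unit_vec n (n - 1) \<bullet> (Ainv *\<^sub>v b0));
         r = \<mu> / \<theta>;
         gn = - (unit_vec n (n - 1) \<bullet> (Ainv *\<^sub>v unit_vec n (n - 1)));
         u = (g0 - r) / (gn * r);
         xeq = - (Ainv *\<^sub>v (b0 - (r * u) \<cdot>\<^sub>v unit_vec n (n - 1)));
         p = vec (n + 2) (\<lambda>i. if i < n then xeq $ i
                              else if i = n then \<mu> / (\<eta> * u) else u / kp)
     in loc_exp_stable (n + 2) (closed_loop n A b0 kp \<eta> \<mu> \<theta>) p)"
proof (intro allI impI)
  fix \<eta> kp :: real assume eta: "\<eta> > 0" and kp: "kp > 0"
  obtain m where nm: "n = Suc m" using n2 by (cases n) auto
  have m1: "m \<ge> 1" using n2 nm by simp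
  have n1m: "n - 1 = m" using nm by simp
  define e :: "real vec" where "e = unit_vec n (n - 1)"
  have e: "e \<in> carrier_vec n" by (simp add: e_def)
  define g0 where "g0 = - (e \<bullet> (Ainv *\<^sub>v b0))"
  define r where "r = \<mu> / \<theta>"
  define gn where "gn = - (e \<bullet> (Ainv *\<^sub>v e))"
  define u where "u = (g0 - r) / (gn * r)"
  define xeq where "xeq = - (Ainv *\<^sub>v (b0 - (r * u) \<cdot>\<^sub>v e))"
  define P where "P = vec (n + 2) (\<lambda>i. if i < n then xeq $ i else if i = n then \<mu> / (\<eta> * u) else u / kp)"
  have g0n: "g0 < 0" using g0_neg by (simp add: g0_def e_def)
  have r_pos: "r > 0" using mu_pos theta_pos by (simp add: r_def)
  define w where "w = Ainv *\<^sub>v e"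
  have w: "w \<in> carrier_vec n" using Ainv_carr e by (simp add: w_def)
  have Aw: "A *\<^sub>v w = e"
  proof -
    have "A *\<^sub>v w = (A * Ainv) *\<^sub>v e" unfolding w_def using assoc_mult_mat_vec[OF A_carr Ainv_carr e] by simp
    also have "\<dots> = e" using Ainv e by simp
    finally show ?thesis .
  qed
  have Arow: "(\<Sum>k<n. A$$(i,k) * w$k) = (if i = m then 1 else 0)" if i: "i < n" for i
  proof -
    have "(\<Sum>k<n. A$$(i,k) * w$k) = (A *\<^sub>v w)$i" using mv_sum[OF A_carr w i] by simp
    also have "\<dots> = (if i = m then 1 else 0)" using Aw i n1m by (simp add: e_def)
    finally show ?thesis .
  qed
  define M where "M = mat m m (\<lambda>(i,j). A$$(i,j))"
  have M: "M \<in> carrier_mat m m" by (simp add: M_def)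
  have Aoff: "\<And>i j. i < n \<Longrightarrow> j < n \<Longrightarrow> i \<noteq> j \<Longrightarrow> A$$(i,j) \<ge> 0"
    using metz A_carr unfolding metzler_def by auto
  have Mmetz: "metzler M" using Aoff nm unfolding metzler_def M_def by auto
  have dimA: "dim_row A = n" using A_carr by simp
  have Mhw: "hurwitz M" using ou S_A_S[OF A_carr nm] unfolding output_unstable_def Let_def dimA M_def by simp
  define a where "a = A$$(m,m)"
  have a_pos: "a > 0"
  proof -
    have "e \<bullet> (A *\<^sub>v e) > 0" using ou unfolding output_unstable_def Let_def dimA e_def by simp
    also have "e \<bullet> (A *\<^sub>v e) = (A *\<^sub>v e)$m" unfolding e_def n1m using A_carr nm by simp
    also have "\<dots> = (\<Sum>k<n. A$$(m,k) * e$k)" using mv_sum[OF A_carr e, of m] nm by simp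
    also have "\<dots> = (\<Sum>k<n. if k = m then A$$(m,k) else 0)" by (intro sum.cong) (auto simp: e_def n1m nm)
    also have "\<dots> = a" using nm by (simp add: a_def)
    finally show ?thesis .
  qed
  define wn where "wn = w$m"
  have rowi: "(\<Sum>k<m. A$$(i,k) * w$k) + A$$(i,m) * wn = 0" if i: "i < m" for i
    using Arow[of i] i nm by (simp add: wn_def)
  have rowm: "(\<Sum>k<m. A$$(m,k) * w$k) + a * wn = 1"
    using Arow[of m] nm by (simp add: wn_def a_def)
  have wn_pos: "wn > 0"
  proof (rule ccontr)
    assume "\<not> wn > 0" hence wn0: "wn \<le> 0" by simp
    define y where "y = vec m (\<lambda>k. w$k)"
    have y: "y \<in> carrier_vec m" by (simp add: y_def)
    have "\<forall>i<m. (M *\<^sub>v y)$i \<ge> 0"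
    proof (intro allI impI)
      fix i assume i: "i < m"
      have "(M *\<^sub>v y)$i = (\<Sum>k<m. A$$(i,k) * w$k)" using mv_sum[OF M y i] i by (simp add: M_def y_def)
      also have "\<dots> = - A$$(i,m) * wn" using rowi[OF i] by simp
      also have "\<dots> \<ge> 0" using Aoff[of i m] i nm wn0 by (simp add: mult_nonneg_nonpos)
      finally show "(M *\<^sub>v y)$i \<ge> 0" .
    qed
    hence yle: "\<And>k. k < m \<Longrightarrow> w$k \<le> 0"
      using metzler_hurwitz_mono[OF M Mmetz Mhw y] by (simp add: y_def)
    have "(\<Sum>k<m. A$$(m,k) * w$k) \<le> 0"
      using Aoff[of m] yle nm by (intro sum_nonpos mult_nonneg_nonpos) auto
    moreover have "a * wn \<le> 0" using a_pos wn0 by (simp add: mult_nonneg_nonpos)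
    ultimately show False using rowm by simp
  qed
  define \<alpha> where "\<alpha> = 1 / wn"
  define pv where "pv = vec m (\<lambda>k. w$k / wn)"
  have pv: "pv \<in> carrier_vec m" by (simp add: pv_def)
  have Mpv: "(M *\<^sub>v pv)$i = - A$$(i,m)" if i: "i < m" for i
  proof -
    have "(M *\<^sub>v pv)$i = (\<Sum>k<m. A$$(i,k) * w$k) / wn"
      using mv_sum[OF M pv i] i by (simp add: M_def pv_def sum_divide_distrib)
    also have "\<dots> = - A$$(i,m)" using rowi[OF i] wn_pos by (simp add: field_simps)
    finally show ?thesis .
  qed
  have rowm_pv: "(\<Sum>k<m. A$$(m,k) * pv$k) = \<alpha> - a"
  proof -
    have "(\<Sum>k<m. A$$(m,k) * pv$k) = (\<Sum>k<m. A$$(m,k) * w$k) / wn"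
      by (simp add: pv_def sum_divide_distrib)
    also have "\<dots> = \<alpha> - a" using rowm wn_pos by (simp add: \<alpha>_def field_simps)
    finally show ?thesis .
  qed
  have gn: "gn = - wn" unfolding gn_def wn_def w_def e_def n1m using Ainv_carr nm by simp
  have u_def2: "u = (r - g0) / (wn * r)" unfolding u_def gn using wn_pos r_pos by (simp add: field_simps)
  have u_gt: "u > \<alpha>"
  proof -
    have "u - \<alpha> = - g0 / (wn * r)" unfolding u_def2 \<alpha>_def using wn_pos r_pos by (simp add: field_simps)
    also have "\<dots> > 0" using g0n wn_pos r_pos by (simp add: divide_neg_pos)
    finally show ?thesis by simp
  qed
  have alpha_pos: "\<alpha> > 0" using wn_pos by (simp add: \<alpha>_def)
  have u_pos: "u > 0" using u_gt alpha_pos by simp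
  have xeq_m: "xeq $ m = r"
  proof -
    have "Ainv *\<^sub>v (b0 - (r * u) \<cdot>\<^sub>v e) = Ainv *\<^sub>v b0 - (r * u) \<cdot>\<^sub>v w"
      using Ainv_carr b0_carr e by (simp add: mult_minus_distrib_mat_vec mult_mat_vec w_def)
    hence "xeq $ m = - ((Ainv *\<^sub>v b0)$m - r * u * wn)"
      unfolding xeq_def using Ainv_carr nm w by (simp add: wn_def)
    also have "(Ainv *\<^sub>v b0)$m = - g0" unfolding g0_def e_def n1m using Ainv_carr nm b0_carr by simp
    also have "r * u * wn = r - g0" unfolding u_def2 using wn_pos r_pos by (simp add: field_simps)
    finally show ?thesis by simp
  qed
  have P: "P \<in> carrier_vec (n+2)" by (simp add: P_def)
  have Pm: "P $ m = r" using xeq_m nm by (simp add: P_def)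
  have Pn: "P $ n = \<mu> / (\<eta> * u)" by (simp add: P_def)
  have Pn1: "P $ (n+1) = u / kp" by (simp add: P_def)
  define Jm where "Jm = mat (n+2) (n+2) (\<lambda>(i,j). JJ n A kp \<eta> \<theta> P i j)"
  have Jac: "jacobian (n+2) (closed_loop n A b0 kp \<eta> \<mu> \<theta>) P = Jm"
    unfolding Jm_def by (rule jac_cl[OF A_carr b0_carr P]) (use nm in simp)
  define c where "c = kp * \<mu> / u"
  define d where "d = \<eta> * u"
  define K where "K = kp * r"
  have c_pos: "c > 0" using kp mu_pos u_pos by (simp add: c_def)
  have d_pos: "d > 0" using eta u_pos by (simp add: d_def)
  have K_pos: "K > 0" using kp r_pos by (simp add: K_def)
  have n1: "n + 1 = Suc (Suc m)" using nm by simp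
  have n2': "n + 2 = Suc (Suc (Suc m))" using nm by simp
  have Pn': "P $ Suc m = \<mu> / (\<eta> * u)" using Pn nm by simp
  have Pn1': "P $ Suc (Suc m) = u / kp" using Pn1 nm by simp
  note JJs = JJ_def Let_def nm Pm Pn' Pn1'
  have J1: "JJ n A kp \<eta> \<theta> P i k = A$$(i,k)" if "i < m" "k < Suc m" for i k using that by (simp add: JJs)
  have J2: "JJ n A kp \<eta> \<theta> P i (Suc m) = 0" "JJ n A kp \<eta> \<theta> P i (Suc (Suc m)) = 0" if "i < m" for i
    using that by (simp_all add: JJs)
  have J3: "JJ n A kp \<eta> \<theta> P m k = A$$(m,k)" if "k < m" for k using that by (simp add: JJs)
  have J4: "JJ n A kp \<eta> \<theta> P m m = a - u" "JJ n A kp \<eta> \<theta> P m (Suc m) = 0"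
     "JJ n A kp \<eta> \<theta> P m (Suc (Suc m)) = - K"
    using kp by (simp_all add: JJs a_def K_def)
  have J5: "JJ n A kp \<eta> \<theta> P (Suc m) k = 0" "JJ n A kp \<eta> \<theta> P (Suc (Suc m)) k = 0" if "k < m" for k
    using that by (simp_all add: JJs)
  have J6: "JJ n A kp \<eta> \<theta> P (Suc m) m = 0" "JJ n A kp \<eta> \<theta> P (Suc m) (Suc m) = - d"
     "JJ n A kp \<eta> \<theta> P (Suc m) (Suc (Suc m)) = - c"
     "JJ n A kp \<eta> \<theta> P (Suc (Suc m)) m = \<theta>" "JJ n A kp \<eta> \<theta> P (Suc (Suc m)) (Suc m) = - d"
     "JJ n A kp \<eta> \<theta> P (Suc (Suc m)) (Suc (Suc m)) = - c"
    using kp eta u_pos by (simp_all add: JJs c_def d_def)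
  have "hurwitz Jm"
    unfolding hurwitz_def
  proof (intro allI impI)
    fix l assume ev: "eigenvalue (map_mat complex_of_real Jm) l"
    show "Re l < 0"
    proof (rule ccontr)
      assume "\<not> Re l < 0" hence l: "Re l \<ge> 0" by simp
      define JC where "JC = map_mat complex_of_real Jm"
      have JC: "JC \<in> carrier_mat (n+2) (n+2)" by (simp add: JC_def Jm_def)
      from ev obtain v where v: "v \<in> carrier_vec (n+2)" "v \<noteq> 0\<^sub>v (n+2)" "JC *\<^sub>v v = l \<cdot>\<^sub>v v"
        unfolding eigenvalue_def eigenvector_def JC_def[symmetric] using JC by auto
      have row: "(\<Sum>k<m. of_real (JJ n A kp \<eta> \<theta> P i k) * v$k) + of_real (JJ n A kp \<eta> \<theta> P i m) * v$m
          + of_real (JJ n A kp \<eta> \<theta> P i (Suc m)) * v$(Suc m) + of_real (JJ n A kp \<eta> \<theta> P i (Suc (Suc m))) * v$(Suc (Suc m))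
          = l * v$i" if i: "i < n+2" for i
      proof -
        have "l * v$i = (JC *\<^sub>v v)$i" using v i by simp
        also have "\<dots> = (\<Sum>k<n+2. JC$$(i,k) * v$k)" by (rule mv_sum[OF JC v(1) i])
        also have "\<dots> = (\<Sum>k<n+2. of_real (JJ n A kp \<eta> \<theta> P i k) * v$k)"
          using i by (intro sum.cong) (auto simp: JC_def Jm_def)
        also have "\<dots> = (\<Sum>k<m. of_real (JJ n A kp \<eta> \<theta> P i k) * v$k) + of_real (JJ n A kp \<eta> \<theta> P i m) * v$m
          + of_real (JJ n A kp \<eta> \<theta> P i (Suc m)) * v$(Suc m) + of_real (JJ n A kp \<eta> \<theta> P i (Suc (Suc m))) * v$(Suc (Suc m))"
          unfolding n2' by simp
        finally show ?thesis by simp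
      qed
      define X where "X = v$m"
      define Z1 where "Z1 = v$(Suc m)"
      define Z2 where "Z2 = v$(Suc (Suc m))"
      have Ri: "(\<Sum>k<m. of_real (A$$(i,k)) * v$k) + of_real (A$$(i,m)) * X = l * v$i" if i: "i < m" for i
      proof -
        have "(\<Sum>k<m. of_real (JJ n A kp \<eta> \<theta> P i k) * v$k) = (\<Sum>k<m. of_real (A$$(i,k)) * v$k)"
          using J1[OF i] by (intro sum.cong) auto
        thus ?thesis using row[of i] i nm J1[OF i, of m] J2[OF i] by (simp add: X_def)
      qed
      have Rm: "(\<Sum>k<m. of_real (A$$(m,k)) * v$k) + (of_real a - of_real u) * X - of_real K * Z2 = l * X"
      proof -
        have "(\<Sum>k<m. of_real (JJ n A kp \<eta> \<theta> P m k) * v$k) = (\<Sum>k<m. of_real (A$$(m,k)) * v$k)"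
          using J3 by (intro sum.cong) auto
        thus ?thesis using row[of m] nm J4 by (simp add: X_def Z2_def)
      qed
      have Rn: "- of_real d * Z1 - of_real c * Z2 = l * Z1"
      proof -
        have "(\<Sum>k<m. of_real (JJ n A kp \<eta> \<theta> P (Suc m) k) * v$k) = 0"
          using J5 by (intro sum.neutral) auto
        thus ?thesis using row[of "Suc m"] nm J6 by (simp add: Z1_def Z2_def)
      qed
      have Rn1: "of_real \<theta> * X - of_real d * Z1 - of_real c * Z2 = l * Z2"
      proof -
        have "(\<Sum>k<m. of_real (JJ n A kp \<eta> \<theta> P (Suc (Suc m)) k) * v$k) = 0"
          using J5 by (intro sum.neutral) auto
        thus ?thesis using row[of "Suc (Suc m)"] nm J6 by (simp add: X_def Z1_def Z2_def)
      qed
      have vm: "cmod (v$k) \<le> pv$k * cmod X" if k: "k < m" for k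
      proof -
        define yv where "yv = vec m (\<lambda>k. cmod (v$k) - pv$k * cmod X)"
        have yv: "yv \<in> carrier_vec m" by (simp add: yv_def)
        have "\<forall>i<m. (M *\<^sub>v yv)$i \<ge> 0"
        proof (intro allI impI)
          fix i assume i: "i < m"
          have Mi: "(M *\<^sub>v yv)$i = (\<Sum>k<m. A$$(i,k) * cmod (v$k)) + A$$(i,m) * cmod X"
          proof -
            have "(M *\<^sub>v yv)$i = (\<Sum>k<m. A$$(i,k) * cmod (v$k) - cmod X * (A$$(i,k) * pv$k))"
              using mv_sum[OF M yv i] i by (auto simp: M_def yv_def algebra_simps intro!: sum.cong)
            also have "\<dots> = (\<Sum>k<m. A$$(i,k) * cmod (v$k)) - cmod X * (\<Sum>k<m. A$$(i,k) * pv$k)"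
              by (simp add: sum_subtractf sum_distrib_left)
            also have "(\<Sum>k<m. A$$(i,k) * pv$k) = - A$$(i,m)"
              using Mpv[OF i] mv_sum[OF M pv i] i by (simp add: M_def)
            finally show ?thesis by simp
          qed
          define T where "T = (\<Sum>k\<in>{..<m}-{i}. of_real (A$$(i,k)) * v$k)"
          have sr: "(\<Sum>k<m. of_real (A$$(i,k)) * v$k) = of_real (A$$(i,i)) * v$i + T"
            unfolding T_def using i by (subst sum.remove[of _ i]) auto
          have sr2: "(\<Sum>k<m. A$$(i,k) * cmod (v$k)) = A$$(i,i) * cmod (v$i) + (\<Sum>k\<in>{..<m}-{i}. A$$(i,k) * cmod (v$k))"
            using i by (subst sum.remove[of _ i]) auto
          have eq: "(l - of_real (A$$(i,i))) * v$i = T + of_real (A$$(i,m)) * X"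
            using Ri[OF i] sr by (simp add: algebra_simps)
          have Aim: "A$$(i,m) \<ge> 0" using Aoff[of i m] i nm by simp
          have "- A$$(i,i) * cmod (v$i) \<le> cmod ((l - of_real (A$$(i,i))) * v$i)"
          proof -
            have "- A$$(i,i) \<le> Re (l - of_real (A$$(i,i)))" using l by simp
            also have "\<dots> \<le> cmod (l - of_real (A$$(i,i)))" by (rule complex_Re_le_cmod)
            finally have "- A$$(i,i) \<le> cmod (l - of_real (A$$(i,i)))" .
            hence "- A$$(i,i) * cmod (v$i) \<le> cmod (l - of_real (A$$(i,i))) * cmod (v$i)"
              by (rule mult_right_mono) simp
            thus ?thesis by (simp add: norm_mult)
          qed
          also have "\<dots> = cmod (T + of_real (A$$(i,m)) * X)" using eq by simp
          also have "\<dots> \<le> cmod T + cmod (of_real (A$$(i,m)) * X)" by (rule norm_triangle_ineq)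
          also have "cmod (of_real (A$$(i,m)) * X) = A$$(i,m) * cmod X" using Aim by (simp add: norm_mult)
          also have "cmod T \<le> (\<Sum>k\<in>{..<m}-{i}. A$$(i,k) * cmod (v$k))"
          proof -
            have "cmod T \<le> (\<Sum>k\<in>{..<m}-{i}. cmod (of_real (A$$(i,k)) * v$k))"
              unfolding T_def by (rule norm_sum)
            also have "\<dots> = (\<Sum>k\<in>{..<m}-{i}. A$$(i,k) * cmod (v$k))"
            proof (intro sum.cong refl)
              fix k assume "k \<in> {..<m}-{i}"
              hence "A$$(i,k) \<ge> 0" using Aoff[of i k] i nm by auto
              thus "cmod (of_real (A$$(i,k)) * v$k) = A$$(i,k) * cmod (v$k)" by (simp add: norm_mult)
            qed
            finally show ?thesis .
          qed
          finally have "- A$$(i,i) * cmod (v$i) \<le> (\<Sum>k\<in>{..<m}-{i}. A$$(i,k) * cmod (v$k)) + A$$(i,m) * cmod X"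
            by simp
          thus "(M *\<^sub>v yv)$i \<ge> 0" unfolding Mi sr2 by simp
        qed
        from metzler_hurwitz_mono[OF M Mmetz Mhw yv this k] show ?thesis by (simp add: yv_def k)
      qed
      define h where "h = (\<Sum>k<m. of_real (A$$(m,k)) * v$k)"
      have hb: "cmod h \<le> (\<alpha> - a) * cmod X"
      proof -
        have "cmod h \<le> (\<Sum>k<m. cmod (of_real (A$$(m,k)) * v$k))" unfolding h_def by (rule norm_sum)
        also have "\<dots> \<le> (\<Sum>k<m. A$$(m,k) * (pv$k * cmod X))"
        proof (intro sum_mono)
          fix k assume "k \<in> {..<m}"
          hence k: "k < m" by simp
          have Amk: "A$$(m,k) \<ge> 0" using Aoff[of m k] k nm by simp
          have "cmod (of_real (A$$(m,k)) * v$k) = A$$(m,k) * cmod (v$k)" using Amk by (simp add: norm_mult)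
          also have "\<dots> \<le> A$$(m,k) * (pv$k * cmod X)" using vm[OF k] Amk by (rule mult_left_mono)
          finally show "cmod (of_real (A$$(m,k)) * v$k) \<le> A$$(m,k) * (pv$k * cmod X)" .
        qed
        also have "\<dots> = (\<Sum>k<m. A$$(m,k) * pv$k) * cmod X" by (subst sum_distrib_right) (simp add: mult_ac)
        also have "\<dots> = (\<alpha> - a) * cmod X" using rowm_pv by simp
        finally show ?thesis .
      qed
      have fin: "X = 0 \<and> Z1 = 0 \<and> Z2 = 0"
        by (rule final_alg[OF l c_pos d_pos K_pos theta_pos u_gt hb Rm[folded h_def] Rn Rn1])
      have "v = 0\<^sub>v (n+2)"
      proof (rule eq_vecI)
        fix k assume "k < dim_vec (0\<^sub>v (n+2) :: complex vec)"
        hence k: "k < Suc (Suc (Suc m))" using nm by simp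
        show "v$k = 0\<^sub>v (n+2) $ k"
        proof -
          have "v$k = 0"
          proof (cases "k < m")
            case True
            from vm[OF True] fin have "cmod (v$k) \<le> 0" by simp
            thus ?thesis by simp
          next
            case False
            hence "k = m \<or> k = Suc m \<or> k = Suc (Suc m)" using k by auto
            thus ?thesis using fin by (auto simp: X_def Z1_def Z2_def)
          qed
          thus ?thesis using k nm by simp
        qed
      qed (use v in simp)
      with v(2) show False by simp
    qed
  qed
  have "loc_exp_stable (n+2) (closed_loop n A b0 kp \<eta> \<mu> \<theta>) P"
    unfolding loc_exp_stable_def Jac by fact
  thus "let g0 = - (unit_vec n (n - 1) \<bullet> (Ainv *\<^sub>v b0));
         r = \<mu> / \<theta>;
         gn = - (unit_vec n (n - 1) \<bullet> (Ainv *\<^sub>v unit_vec n (n - 1)));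
         u = (g0 - r) / (gn * r);
         xeq = - (Ainv *\<^sub>v (b0 - (r * u) \<cdot>\<^sub>v unit_vec n (n - 1)));
         p = vec (n + 2) (\<lambda>i. if i < n then xeq $ i
                              else if i = n then \<mu> / (\<eta> * u) else u / kp)
     in loc_exp_stable (n + 2) (closed_loop n A b0 kp \<eta> \<mu> \<theta>) p"
    unfolding Let_def P_def xeq_def u_def gn_def r_def g0_def e_def .
qed

end
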